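(* Let $\alpha,\beta\in(0,1)$ with $\alpha\ne\beta$, and set $x=[\alpha N]$, $y=[\beta N]$. (i) For the symmetric walk and for the weakly asymmetric walk (any fixed $c>0$), $$\lim_{N\to\infty}P_x\big(G(y)\equiv1\ (\mathrm{mod}\ 2)\,\big|\,T_y<T_N<T_0\big)=\lim_{N\to\infty}P_x\big(G(y)\equiv1\ (\mathrm{mod}\ 2)\,\big|\,T_y<T_0<T_N\big)=\frac12,$$ and consequently $\lim_{N\to\infty}P_x\big(G(y)\equiv1\ (\mathrm{mod}\ 2)\,\big|\,T_y<\tau_N\big)=\frac12$. (ii) For the asymmetric walk with fixed $q<p$ and $\alpha<\beta$, $$\lim_{N\to\infty}P_x\big(G(y)\equiv1\ (\mathrm{mod}\ 2)\big)=\frac{1}{2-(p-q)}.$$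
   Context: Let $\mathcal T_N=\{0,\dots,N\}$ and let $(X_n)$ be a nearest-neighbour random walk on $\mathcal T_N$ stepping right with probability $p_N$ and left with probability $q_N=1-p_N$, independently, stopped the first time it is at $0$ or $N$. $P_x$ denotes the law with $X_0=x$. The walk is called: - symmetric if $p_N=q_N=1/2$; - weakly asymmetric (fixed $c>0$) if $q_N=1/2-c/N$ and $p_N=1/2+c/N$; - asymmetric if $p_N=p$ and $q_N=q$ are fixed with $p+q=1$ and $q<p$. $T_a=\inf\{n\ge1:X_n=a\}$, $\tau_N=T_0\wedge T_N$, and $G(y)=\sum_{k=0}^{\tau_N}\mathbf 1\{X_k=y\}$ is the number of visits to $y$ before exit. $[\cdot]$ is the integer part. *)

theory Defs
  imports "HOL-Probability.Probability"
begin

text \<open>The walk is driven by an i.i.d. sequence of Bernoulli(p) coin flips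
  (True = step right, probability p; False = step left, probability 1-p).\<close>

definition walk_space :: "real \<Rightarrow> bool stream measure" where
  "walk_space p = stream_space (measure_pmf (bernoulli_pmf p))"

fun rw :: "nat \<Rightarrow> nat \<Rightarrow> bool stream \<Rightarrow> nat \<Rightarrow> nat" where
  "rw N x \<omega> 0 = x"
| "rw N x \<omega> (Suc n) =
     (let z = rw N x \<omega> n in
      if z = 0 \<or> z = N then z else if \<omega> !! n then z + 1 else z - 1)"

definition hit :: "nat \<Rightarrow> nat \<Rightarrow> bool stream \<Rightarrow> nat \<Rightarrow> enat" where
  "hit N x \<omega> a =
     (if \<exists>n\<ge>1. rw N x \<omega> n = a then enat (LEAST n. n \<ge> 1 \<and> rw N x \<omega> n = a) else \<infinity>)"

definition exit_time :: "nat \<Rightarrow> nat \<Rightarrow> bool stream \<Rightarrow> enat" where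
  "exit_time N x \<omega> = min (hit N x \<omega> 0) (hit N x \<omega> N)"

text \<open>G(y): number of k with 0 \<le> k \<le> tau_N and X_k = y
  (tau_N is almost surely finite).\<close>
definition visits :: "nat \<Rightarrow> nat \<Rightarrow> bool stream \<Rightarrow> nat \<Rightarrow> nat" where
  "visits N x \<omega> y = card {k. enat k \<le> exit_time N x \<omega> \<and> rw N x \<omega> k = y}"

definition prob_of :: "'a measure \<Rightarrow> ('a \<Rightarrow> bool) \<Rightarrow> real" where
  "prob_of M A = measure M {\<omega> \<in> space M. A \<omega>}"

definition walk_cond_prob :: "'a measure \<Rightarrow> ('a \<Rightarrow> bool) \<Rightarrow> ('a \<Rightarrow> bool) \<Rightarrow> real" where
  "walk_cond_prob M A B = prob_of M (\<lambda>\<omega>. A \<omega> \<and> B \<omega>) / prob_of M B"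

definition ipart :: "real \<Rightarrow> nat \<Rightarrow> nat" where
  "ipart a N = nat \<lfloor>a * real N\<rfloor>"

end

theory Submission
  imports Defs
begin


definition step :: "nat \<Rightarrow> nat \<Rightarrow> bool \<Rightarrow> nat" where
  "step N z b = (if z = 0 \<or> z = N then z else if b then z+1 else z-1)"

lemma rw_Cons: "rw N z (b ## \<omega>) (Suc n) = rw N (step N z b) \<omega> n"
  by (induction n) (auto simp: step_def Let_def)

lemma rw_absorb: "rw N z \<omega> n \<in> {0,N} \<Longrightarrow> rw N z \<omega> (n+m) = rw N z \<omega> n"
  by (induction m) (auto simp: Let_def)

lemma rw_absorb': "rw N z \<omega> n \<in> {0,N} \<Longrightarrow> n \<le> k \<Longrightarrow> rw N z \<omega> k = rw N z \<omega> n"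
  using rw_absorb[of N z \<omega> n "k-n"] by auto

lemma rw_start0[simp]: "rw N 0 \<omega> n = 0"
  using rw_absorb[of N 0 \<omega> 0 n] by simp

lemma rw_startN[simp]: "rw N N \<omega> n = N"
  using rw_absorb[of N N \<omega> 0 n] by simp

lemma Vset_Cons: "{k. rw N z (b ## \<omega>) k = y} =
   (if z = y then {0} else {}) \<union> Suc ` {k. rw N (step N z b) \<omega> k = y}"
proof -
  have "k \<in> {k. rw N z (b ## \<omega>) k = y} \<longleftrightarrow>
        k \<in> (if z = y then {0} else {}) \<union> Suc ` {k. rw N (step N z b) \<omega> k = y}" for k
  proof (cases k)
    case 0 then show ?thesis by auto
  next
    case (Suc n)
    have "rw N z (b ## \<omega>) k = rw N (step N z b) \<omega> n" unfolding Suc by (rule rw_Cons)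
    then show ?thesis using Suc by auto
  qed
  then show ?thesis by blast
qed

definition absK :: "nat \<Rightarrow> nat set \<Rightarrow> nat \<Rightarrow> bool stream \<Rightarrow> bool" where
  "absK N K z \<omega> = (\<exists>n. rw N z \<omega> n \<in> K)"

lemma absK_Cons: "absK N K z (b ## \<omega>) = (z \<in> K \<or> absK N K (step N z b) \<omega>)"
  unfolding absK_def
  by (metis rw.simps(1) rw_Cons not0_implies_Suc)

lemma absK_finite:
  assumes "K \<subseteq> {0,N}" "y \<noteq> 0" "y \<noteq> N" "absK N K z \<omega>"
  shows "finite {k. rw N z \<omega> k = y}"
proof -
  obtain n where n: "rw N z \<omega> n \<in> K" using assms unfolding absK_def by auto
  have "{k. rw N z \<omega> k = y} \<subseteq> {..<n}"
  proof
    fix k assume "k \<in> {k. rw N z \<omega> k = y}"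
    then have k: "rw N z \<omega> k = y" by simp
    show "k \<in> {..<n}"
    proof (rule ccontr)
      assume "k \<notin> {..<n}"
      then have "rw N z \<omega> k = rw N z \<omega> n" using n assms(1) by (intro rw_absorb') auto
      then show False using k n assms by auto
    qed
  qed
  then show ?thesis using finite_subset by blast
qed

lemma rw_meas[measurable]: "(\<lambda>\<omega>. rw N z \<omega> n) \<in> measurable (walk_space p) (count_space UNIV)"
  unfolding walk_space_def
proof (induction n)
  case 0 then show ?case by simp
next
  case (Suc n)
  note Suc[measurable]
  show ?case by (simp add: Let_def) measurable
qed

lemma pred_in_count:
  assumes "f \<in> measurable M (count_space UNIV)"
  shows "Measurable.pred M (\<lambda>x. f x \<in> K)"
proof -
  have "f -` K \<inter> space M \<in> sets M" using measurable_sets[OF assms, of K] by simp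
  moreover have "{x \<in> space M. f x \<in> K} = f -` K \<inter> space M" by auto
  ultimately have "{x \<in> space M. f x \<in> K} \<in> sets M" by simp
  then show ?thesis by (simp only: pred_def)
qed

lemma pred_absK[measurable]: "Measurable.pred (walk_space p) (absK N K z)"
  unfolding absK_def by (intro pred_intros_countable pred_in_count rw_meas)

lemma pred_odd_card_less:
  assumes [measurable]: "\<And>k::nat. Measurable.pred M (\<lambda>\<omega>. P \<omega> k)"
  shows "Measurable.pred M (\<lambda>\<omega>. odd (card {k\<in>{..<n}. P \<omega> k}))"
proof (induction n)
  case 0 then show ?case by simp
next
  case (Suc n)
  note Suc[measurable]
  have eq: "odd (card {k\<in>{..<Suc n}. P \<omega> k}) = (odd (card {k\<in>{..<n}. P \<omega> k}) \<noteq> P \<omega> n)" for \<omega>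
  proof -
    have "{k\<in>{..<Suc n}. P \<omega> k} = (if P \<omega> n then insert n {k\<in>{..<n}. P \<omega> k} else {k\<in>{..<n}. P \<omega> k})"
      by (auto simp: less_Suc_eq)
    then show ?thesis by auto
  qed
  show ?case unfolding eq
    by (rule pred_intros_logic(2), rule pred_intros_logic(6)) (rule Suc.IH, rule assms)
qed

lemma pred_odd_card:
  assumes [measurable]: "\<And>k::nat. Measurable.pred M (\<lambda>\<omega>. P \<omega> k)"
  shows "Measurable.pred M (\<lambda>\<omega>. odd (card {k. P \<omega> k}))"
proof -
  have eq: "odd (card {k. P \<omega> k}) \<longleftrightarrow> (\<exists>n. (\<forall>k. n \<le> k \<longrightarrow> \<not> P \<omega> k) \<and> odd (card {k\<in>{..<n}. P \<omega> k}))" for \<omega>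
  proof
    assume o: "odd (card {k. P \<omega> k})"
    then have "card {k. P \<omega> k} \<noteq> 0" by (intro notI) simp
    then have "finite {k. P \<omega> k}" by (meson card.infinite)
    then obtain n where n: "\<forall>k\<in>{k. P \<omega> k}. k < n" using finite_nat_set_iff_bounded by blast
    then have e: "{k. P \<omega> k} = {k\<in>{..<n}. P \<omega> k}" by blast
    have "\<forall>k. n \<le> k \<longrightarrow> \<not> P \<omega> k" using n by (meson mem_Collect_eq not_le)
    moreover have "odd (card {k\<in>{..<n}. P \<omega> k})" using o e by simp
    ultimately show "\<exists>n. (\<forall>k. n \<le> k \<longrightarrow> \<not> P \<omega> k) \<and> odd (card {k\<in>{..<n}. P \<omega> k})"
      by blast
  next
    assume "\<exists>n. (\<forall>k. n \<le> k \<longrightarrow> \<not> P \<omega> k) \<and> odd (card {k\<in>{..<n}. P \<omega> k})"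
    then obtain n where n: "\<forall>k. n \<le> k \<longrightarrow> \<not> P \<omega> k" "odd (card {k\<in>{..<n}. P \<omega> k})" by blast
    then have "{k. P \<omega> k} = {k\<in>{..<n}. P \<omega> k}" by (meson lessThan_iff not_le)
    then show "odd (card {k. P \<omega> k})" using n by simp
  qed
  have [measurable]: "Measurable.pred M (\<lambda>\<omega>. odd (card {k\<in>{..<n}. P \<omega> k}))" for n
    by (rule pred_odd_card_less) simp
  show ?thesis unfolding eq
    apply (rule pred_intros_countable(2))
    apply (rule pred_intros_logic(3))
     apply (rule pred_intros_countable(1))
     apply (rule pred_intros_imp')
     apply (rule pred_intros_logic(2))
     apply (rule assms)
    apply (rule pred_odd_card_less, rule assms)
    done
qed

lemma pred_odd_vis[measurable]: "Measurable.pred (walk_space p) (\<lambda>\<omega>. odd (card {k. rw N z \<omega> k = y}))"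
proof (rule pred_odd_card)
  fix k
  show "Measurable.pred (walk_space p) (\<lambda>\<omega>. rw N z \<omega> k = y)"
    using pred_in_count[OF rw_meas[where N=N and z=z and n=k and p=p], where K="{y}"] by simp
qed

lemma prob_space_walk: "prob_space (walk_space p)"
  unfolding walk_space_def
  by (rule prob_space.prob_space_stream_space) (rule prob_space_measure_pmf)

lemma ennreal_comb:
  fixes a b p :: real
  assumes "0\<le>a" "0\<le>b" "0\<le>p" "p\<le>1"
  shows "ennreal a * ennreal p + ennreal b * ennreal (1-p) = ennreal (p*a + (1-p)*b)"
proof -
  have "ennreal (p*a + (1-p)*b) = ennreal (p*a) + ennreal ((1-p)*b)"
    using assms by (intro ennreal_plus) auto
  also have "ennreal (p*a) = ennreal a * ennreal p" using assms by (simp add: ennreal_mult' mult.commute)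
  also have "ennreal ((1-p)*b) = ennreal b * ennreal (1-p)" using assms by (simp add: ennreal_mult' mult.commute)
  finally show ?thesis by simp
qed

lemma first_step:
  assumes p: "0 \<le> p" "p \<le> 1" and Q[measurable]: "Measurable.pred (walk_space p) Q"
  shows "prob_of (walk_space p) Q =
     p * prob_of (walk_space p) (\<lambda>\<omega>. Q (True ## \<omega>)) + (1-p) * prob_of (walk_space p) (\<lambda>\<omega>. Q (False ## \<omega>))"
proof -
  interpret B: prob_space "measure_pmf (bernoulli_pmf p)" by (rule prob_space_measure_pmf)
  have Qs: "{x \<in> space (stream_space (measure_pmf (bernoulli_pmf p))). Q x} \<in> sets (stream_space (measure_pmf (bernoulli_pmf p)))"
    using Q unfolding walk_space_def pred_def by simp
  have "ennreal (prob_of (walk_space p) Q) =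
     ennreal (prob_of (walk_space p) (\<lambda>\<omega>. Q (True ## \<omega>))) * p + ennreal (prob_of (walk_space p) (\<lambda>\<omega>. Q (False ## \<omega>))) * (1-p)"
    unfolding prob_of_def walk_space_def
    using prob_space.prob_stream_space[OF prob_space_measure_pmf Qs] p by simp
  also have "\<dots> = ennreal (p * prob_of (walk_space p) (\<lambda>\<omega>. Q (True ## \<omega>)) + (1-p) * prob_of (walk_space p) (\<lambda>\<omega>. Q (False ## \<omega>)))"
    using p by (intro ennreal_comb) (auto simp: prob_of_def)
  finally have e: "ennreal (prob_of (walk_space p) Q) = ennreal (p * prob_of (walk_space p) (\<lambda>\<omega>. Q (True ## \<omega>)) + (1-p) * prob_of (walk_space p) (\<lambda>\<omega>. Q (False ## \<omega>)))" .
  have n1: "0 \<le> prob_of (walk_space p) Q" by (simp add: prob_of_def)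
  have n2: "0 \<le> p * prob_of (walk_space p) (\<lambda>\<omega>. Q (True ## \<omega>)) + (1-p) * prob_of (walk_space p) (\<lambda>\<omega>. Q (False ## \<omega>))"
    using p unfolding prob_of_def by (intro add_nonneg_nonneg mult_nonneg_nonneg) auto
  show ?thesis using ennreal_inj[OF n1 n2] e by blast
qed


definition Sg :: "real \<Rightarrow> nat \<Rightarrow> real" where
  "Sg \<rho> k = (\<Sum>j<k. \<rho> ^ j)"

lemma Sg_0[simp]: "Sg \<rho> 0 = 0" and Sg_1[simp]: "Sg \<rho> 1 = 1"
  by (simp_all add: Sg_def)

lemma Sg_Suc0[simp]: "Sg \<rho> (Suc 0) = 1" by (simp add: Sg_def)

lemma Sg_Suc: "Sg \<rho> (Suc k) = Sg \<rho> k + \<rho> ^ k"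
  by (simp add: Sg_def)

lemma Sg_ge1: "0 \<le> \<rho> \<Longrightarrow> 1 \<le> k \<Longrightarrow> 1 \<le> Sg \<rho> k"
proof (induction k)
  case 0 then show ?case by simp
next
  case (Suc k) then show ?case by (cases "k = 0") (auto simp: Sg_Suc add_increasing2)
qed

lemma Sg_mono: "0 \<le> \<rho> \<Longrightarrow> m \<le> k \<Longrightarrow> Sg \<rho> m \<le> Sg \<rho> k"
  unfolding Sg_def by (rule sum_mono2) auto

lemma harm_aux: "(p::real) > 0 \<Longrightarrow> (ga + D*(S+t)) - (1-p)*(ga + D*S) = p*(ga + D*(S + t + t*((1-p)/p)))"
  by (simp add: field_simps)

lemma harm_formula:
  fixes g :: "nat \<Rightarrow> real"
  assumes p: "0 < p" and q: "q = 1 - p"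
    and h: "\<And>z. a < z \<Longrightarrow> z < b \<Longrightarrow> g z = p * g (z+1) + q * g (z-1)"
  shows "a + d \<le> b \<Longrightarrow> g (a+d) = g a + (g (a+1) - g a) * Sg (q/p) d"
proof -
  let ?P = "\<lambda>d. a + d \<le> b \<longrightarrow> g (a+d) = g a + (g (a+1) - g a) * Sg (q/p) d"
  have "?P d \<and> ?P (Suc d)" for d
  proof (induction d)
    case 0 then show ?case using Sg_1 by simp
  next
    case (Suc d)
    have "?P (Suc (Suc d))"
    proof
      assume le: "a + Suc (Suc d) \<le> b"
      have e: "g (a + Suc d) = p * g (a + Suc d + 1) + q * g (a + Suc d - 1)"
        using le by (intro h) auto
      have i1: "g (a+d) = g a + (g (a+1) - g a) * Sg (q/p) d" using Suc le by auto
      have i2: "g (a+Suc d) = g a + (g (a+1) - g a) * Sg (q/p) (Suc d)" using Suc le by auto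
      have S2: "Sg (q/p) (Suc (Suc d)) = Sg (q/p) d + (q/p)^d + (q/p)^d * (q/p)"
        by (simp add: Sg_Suc)
      have S1: "Sg (q/p) (Suc d) = Sg (q/p) d + (q/p)^d" by (simp add: Sg_Suc)
      have "p * g (a + Suc (Suc d)) = g (a + Suc d) - q * g (a + d)"
        using e by (simp add: algebra_simps)
      also have "\<dots> = p * (g a + (g (a+1) - g a) * Sg (q/p) (Suc (Suc d)))"
        unfolding i1 i2 S1 S2 using harm_aux[OF p] q by simp
      finally show "g (a + Suc (Suc d)) = g a + (g (a+1) - g a) * Sg (q/p) (Suc (Suc d))"
        using p by simp
    qed
    then show ?case using Suc by simp
  qed
  then show "a + d \<le> b \<Longrightarrow> g (a+d) = g a + (g (a+1) - g a) * Sg (q/p) d" by blast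
qed


lemma space_walk[simp]: "space (walk_space p) = UNIV"
  by (simp add: walk_space_def space_stream_space)

lemma prob_of_set: "prob_of (walk_space p) Q = measure (walk_space p) {\<omega>. Q \<omega>}"
  by (simp add: prob_of_def)

lemma pred_sets: "Measurable.pred (walk_space p) Q \<Longrightarrow> {\<omega>. Q \<omega>} \<in> sets (walk_space p)"
  by (simp add: pred_def)

lemma pw_true: "prob_of (walk_space p) (\<lambda>_. True) = 1"
proof -
  interpret W: prob_space "walk_space p" by (rule prob_space_walk)
  show ?thesis using W.prob_space by (simp add: prob_of_def)
qed

lemma pw_false: "prob_of (walk_space p) (\<lambda>_. False) = 0"
  by (simp add: prob_of_def)

lemma pw_diff:
  assumes "Measurable.pred (walk_space p) Q" "Measurable.pred (walk_space p) A"
  shows "prob_of (walk_space p) (\<lambda>\<omega>. \<not> Q \<omega> \<and> A \<omega>) = prob_of (walk_space p) A - prob_of (walk_space p) (\<lambda>\<omega>. Q \<omega> \<and> A \<omega>)"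
proof -
  interpret W: prob_space "walk_space p" by (rule prob_space_walk)
  note assms[measurable]
  have "Measurable.pred (walk_space p) (\<lambda>\<omega>. Q \<omega> \<and> A \<omega>)" by measurable
  then have s: "{\<omega>. A \<omega>} \<in> sets (walk_space p)" "{\<omega>. Q \<omega> \<and> A \<omega>} \<in> sets (walk_space p)"
    using assms by (auto simp: pred_def)
  have "{\<omega>. \<not> Q \<omega> \<and> A \<omega>} = {\<omega>. A \<omega>} - {\<omega>. Q \<omega> \<and> A \<omega>}" by auto
  moreover have "{\<omega>. Q \<omega> \<and> A \<omega>} \<subseteq> {\<omega>. A \<omega>}" by auto
  ultimately show ?thesis using W.finite_measure_Diff[OF s] by (simp add: prob_of_def)
qed

lemma pw_mono:
  assumes "Measurable.pred (walk_space p) B" "\<And>\<omega>. A \<omega> \<Longrightarrow> B \<omega>"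
  shows "prob_of (walk_space p) A \<le> prob_of (walk_space p) B"
proof -
  interpret W: prob_space "walk_space p" by (rule prob_space_walk)
  show ?thesis using assms unfolding prob_of_def
    by (intro W.finite_measure_mono) (auto simp: pred_def)
qed

lemma pw_nonneg: "0 \<le> prob_of (walk_space p) A"
  by (simp add: prob_of_def)

lemma pw_full:
  assumes [measurable]: "Measurable.pred (walk_space p) Q" "Measurable.pred (walk_space p) A"
    and one: "prob_of (walk_space p) A = 1"
  shows "prob_of (walk_space p) (\<lambda>\<omega>. Q \<omega> \<and> A \<omega>) = prob_of (walk_space p) Q"
proof -
  have "prob_of (walk_space p) (\<lambda>\<omega>. \<not> A \<omega> \<and> Q \<omega>) = prob_of (walk_space p) Q - prob_of (walk_space p) (\<lambda>\<omega>. A \<omega> \<and> Q \<omega>)"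
    by (rule pw_diff) (simp_all add: assms)
  moreover have "prob_of (walk_space p) (\<lambda>\<omega>. \<not> A \<omega> \<and> Q \<omega>) \<le> prob_of (walk_space p) (\<lambda>\<omega>. \<not> A \<omega> \<and> True)"
    by (rule pw_mono) auto
  moreover have "prob_of (walk_space p) (\<lambda>\<omega>. \<not> A \<omega> \<and> True) = 0"
    using pw_diff[where p=p and Q=A and A="\<lambda>_. True"] one pw_true[where p=p] by simp
  moreover note pw_nonneg[where p=p and A="\<lambda>\<omega>. \<not> A \<omega> \<and> Q \<omega>"]
  ultimately show ?thesis by (simp add: conj_commute)
qed


locale walkN =
  fixes p :: real and N y :: nat
  assumes p_pos: "0 < p" and p_le: "p \<le> 1" and y_pos: "0 < y" and y_lt: "y < N"
begin

definition "q = 1 - p"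
definition "\<rho> = q / p"
definition "w z = (if z \<le> y then Sg \<rho> z / Sg \<rho> y else 1 - Sg \<rho> (z-y) / Sg \<rho> (N-y))"
definition "Lc = Sg \<rho> (y-1) / Sg \<rho> y"
definition "s = 1 / Sg \<rho> (N-y)"
definition "r = p*(1-s) + q*Lc"

lemma q_ge: "0 \<le> q" using p_le by (simp add: q_def)
lemma rho_ge: "0 \<le> \<rho>" using q_ge p_pos by (simp add: \<rho>_def)
lemma SgY: "1 \<le> Sg \<rho> y" using y_pos rho_ge by (intro Sg_ge1) auto
lemma SgNY: "1 \<le> Sg \<rho> (N-y)" using y_lt rho_ge by (intro Sg_ge1) auto

lemma Lc_bounds: "0 \<le> Lc" "Lc \<le> 1"
proof -
  have "0 \<le> Sg \<rho> (y-1)" unfolding Sg_def using rho_ge by (intro sum_nonneg) auto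
  moreover have "Sg \<rho> (y-1) \<le> Sg \<rho> y" using rho_ge by (intro Sg_mono) auto
  ultimately show "0 \<le> Lc" "Lc \<le> 1" using SgY by (auto simp: Lc_def)
qed

lemma s_bounds: "0 < s" "s \<le> 1" using SgNY by (auto simp: s_def)

lemma one_minus_r: "1 - r = p * s + q * (1 - Lc)"
  by (simp add: r_def q_def algebra_simps)

lemma r_bounds: "0 \<le> r" "r < 1"
proof -
  show "0 \<le> r" unfolding r_def using p_pos s_bounds q_ge Lc_bounds by auto
  have "0 < p * s" using p_pos s_bounds by auto
  moreover have "0 \<le> q * (1 - Lc)" using q_ge Lc_bounds by auto
  ultimately show "r < 1" using one_minus_r by linarith
qed

definition harm :: "(nat \<Rightarrow> real) \<Rightarrow> bool" where
  "harm g \<longleftrightarrow> (\<forall>z. 0 < z \<longrightarrow> z < N \<longrightarrow> z \<noteq> y \<longrightarrow> g z = p * g (z+1) + q * g (z-1))"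

lemma harm_left:
  assumes "harm g" "z \<le> y"
  shows "g z = g 0 + (g y - g 0) * Sg \<rho> z / Sg \<rho> y"
proof -
  have h: "\<And>z. 0 < z \<Longrightarrow> z < y \<Longrightarrow> g z = p * g (z+1) + q * g (z-1)"
    using assms(1) y_lt unfolding harm_def by auto
  have f: "\<And>d. 0 + d \<le> y \<Longrightarrow> g (0+d) = g 0 + (g (0+1) - g 0) * Sg (q/p) d"
    by (rule harm_formula[OF p_pos q_def h]) auto
  have fy: "g y = g 0 + (g 1 - g 0) * Sg \<rho> y" using f[of y] by (simp add: \<rho>_def)
  have fz: "g z = g 0 + (g 1 - g 0) * Sg \<rho> z" using f[of z] assms by (simp add: \<rho>_def)
  have "g 1 - g 0 = (g y - g 0) / Sg \<rho> y" using fy SgY by (simp add: field_simps)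
  then show ?thesis using fz by simp
qed

lemma harm_right:
  assumes "harm g" "y \<le> z" "z \<le> N"
  shows "g z = g y + (g N - g y) * Sg \<rho> (z-y) / Sg \<rho> (N-y)"
proof -
  have h: "\<And>z. y < z \<Longrightarrow> z < N \<Longrightarrow> g z = p * g (z+1) + q * g (z-1)"
    using assms(1) y_pos unfolding harm_def by auto
  have f: "\<And>d. y + d \<le> N \<Longrightarrow> g (y+d) = g y + (g (y+1) - g y) * Sg (q/p) d"
    by (rule harm_formula[OF p_pos q_def h]) auto
  have fy: "g N = g y + (g (y+1) - g y) * Sg \<rho> (N-y)" using f[of "N-y"] y_lt by (simp add: \<rho>_def)
  have fz: "g z = g y + (g (y+1) - g y) * Sg \<rho> (z-y)" using f[of "z-y"] assms by (simp add: \<rho>_def)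
  have "g (y+1) - g y = (g N - g y) / Sg \<rho> (N-y)" using fy SgNY by (simp add: field_simps)
  then show ?thesis using fz by simp
qed

lemma harm_w:
  assumes "harm g" "g 0 = 0" "g N = 0" "z \<le> N"
  shows "g z = g y * w z"
proof (cases "z \<le> y")
  case True then show ?thesis using harm_left[OF assms(1) True] assms by (simp add: w_def)
next
  case False
  then show ?thesis using harm_right[OF assms(1) _ assms(4)] assms by (simp add: w_def algebra_simps)
qed

lemma harm_ym1:
  assumes "harm g" shows "g (y-1) = g y * Lc + g 0 * (1 - Lc)"
  using harm_left[OF assms, of "y-1"] SgY by (simp add: Lc_def field_simps)

lemma harm_yp1:
  assumes "harm g" shows "g (y+1) = g y * (1 - s) + g N * s"
  using harm_right[OF assms, of "y+1"] y_lt SgNY by (simp add: s_def field_simps)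

lemma w_pos:
  assumes "0 < x" "x < N" "x \<le> y \<or> 0 < \<rho>"
  shows "0 < w x"
proof (cases "x \<le> y")
  case True
  then show ?thesis using Sg_ge1[OF rho_ge, of x] assms SgY by (auto simp: w_def)
next
  case False
  then have rp: "0 < \<rho>" using assms by auto
  have "Sg \<rho> (Suc (x-y)) \<le> Sg \<rho> (N-y)" using False assms rho_ge by (intro Sg_mono) auto
  moreover have "Sg \<rho> (Suc (x-y)) = Sg \<rho> (x-y) + \<rho>^(x-y)" by (simp add: Sg_Suc)
  moreover have "0 < \<rho>^(x-y)" using rp by simp
  ultimately have "Sg \<rho> (x-y) < Sg \<rho> (N-y)" by linarith
  then show ?thesis using False SgNY by (simp add: w_def field_simps)
qed

end


context walkN
begin

abbreviation PP :: "(bool stream \<Rightarrow> bool) \<Rightarrow> real" where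
  "PP Q \<equiv> prob_of (walk_space p) Q"

lemma step_int: "0 < z \<Longrightarrow> z < N \<Longrightarrow> step N z True = z+1 \<and> step N z False = z-1"
  by (simp add: step_def)

lemma first_step_int:
  assumes meas: "Measurable.pred (walk_space p) (F z)" and z: "0 < z" "z < N"
  shows "PP (F z) = p * PP (\<lambda>\<omega>. F z (True ## \<omega>)) + q * PP (\<lambda>\<omega>. F z (False ## \<omega>))"
  using first_step[OF _ p_le meas] p_pos by (simp add: q_def)

lemma harm_prob:
  assumes meas: "\<And>z. Measurable.pred (walk_space p) (F z)"
    and sh: "\<And>z b \<omega>. 0 < z \<Longrightarrow> z < N \<Longrightarrow> z \<noteq> y \<Longrightarrow> F z (b ## \<omega>) = F (step N z b) \<omega>"
  shows "harm (\<lambda>z. PP (F z))"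
  unfolding harm_def
proof (intro allI impI)
  fix z assume z: "0 < z" "z < N" "z \<noteq> y"
  have "PP (F z) = p * PP (\<lambda>\<omega>. F z (True ## \<omega>)) + q * PP (\<lambda>\<omega>. F z (False ## \<omega>))"
    by (rule first_step_int[OF meas z(1,2)])
  also have "(\<lambda>\<omega>. F z (True ## \<omega>)) = F (z+1)" using sh[OF z] step_int[OF z(1,2)] by auto
  also have "(\<lambda>\<omega>. F z (False ## \<omega>)) = F (z-1)" using sh[OF z] step_int[OF z(1,2)] by auto
  finally show "PP (F z) = p * PP (F (z+1)) + q * PP (F (z-1))" .
qed

definition Vc :: "nat \<Rightarrow> bool stream \<Rightarrow> nat" where
  "Vc z \<omega> = card {k. rw N z \<omega> k = y}"

definition Fodd :: "nat set \<Rightarrow> nat \<Rightarrow> bool stream \<Rightarrow> bool" where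
  "Fodd K z \<omega> = (odd (Vc z \<omega>) \<and> absK N K z \<omega>)"

definition Fhy :: "nat set \<Rightarrow> nat \<Rightarrow> bool stream \<Rightarrow> bool" where
  "Fhy K z \<omega> = (absK N {y} z \<omega> \<and> absK N K z \<omega>)"

lemma meas_Fodd[measurable]: "Measurable.pred (walk_space p) (Fodd K z)"
  unfolding Fodd_def Vc_def by (intro pred_intros_logic(3) pred_odd_vis pred_absK)

lemma meas_Fhy[measurable]: "Measurable.pred (walk_space p) (Fhy K z)"
  unfolding Fhy_def by (intro pred_intros_logic(3) pred_absK)

lemma meas_odd: "Measurable.pred (walk_space p) (\<lambda>\<omega>. odd (Vc z \<omega>))"
  unfolding Vc_def by (rule pred_odd_vis)

lemma Vc_Cons_ne: "z \<noteq> y \<Longrightarrow> Vc z (b ## \<omega>) = Vc (step N z b) \<omega>"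
  unfolding Vc_def by (simp add: Vset_Cons card_image)

lemma Vc_Cons_y:
  assumes "finite {k. rw N (step N y b) \<omega> k = y}"
  shows "Vc y (b ## \<omega>) = Suc (Vc (step N y b) \<omega>)"
proof -
  have "{k. rw N y (b ## \<omega>) k = y} = insert 0 (Suc ` {k. rw N (step N y b) \<omega> k = y})"
    by (simp add: Vset_Cons)
  moreover have "0 \<notin> Suc ` {k. rw N (step N y b) \<omega> k = y}" by auto
  ultimately show ?thesis unfolding Vc_def using assms by (simp add: card_image)
qed

lemma absK_Cons_int:
  assumes "0 < z" "z < N" "K \<subseteq> {0,N}"
  shows "absK N K z (b ## \<omega>) = absK N K (step N z b) \<omega>"
  using assms absK_Cons[of N K z b \<omega>] by auto

lemma absKy_Cons_ne:
  assumes "z \<noteq> y"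
  shows "absK N {y} z (b ## \<omega>) = absK N {y} (step N z b) \<omega>"
  using assms absK_Cons[of N "{y}" z b \<omega>] by auto

lemma absKy_self: "absK N {y} y \<omega>"
  unfolding absK_def by (intro exI[of _ 0]) simp

definition "U K z = PP (absK N K z)"
definition "Od K z = PP (Fodd K z)"
definition "T K z = PP (Fhy K z)"

context
  fixes K assumes K: "K \<subseteq> {0,N}"
begin

lemma harm_U: "harm (U K)"
  unfolding U_def by (rule harm_prob[OF pred_absK absK_Cons_int[OF _ _ K]])

lemma harm_O: "harm (Od K)"
  unfolding Od_def
proof (rule harm_prob[OF meas_Fodd])
  fix z b \<omega> assume "0 < z" "z < N" "z \<noteq> y"
  then show "Fodd K z (b ## \<omega>) = Fodd K (step N z b) \<omega>"
    unfolding Fodd_def using Vc_Cons_ne absK_Cons_int[OF _ _ K] by simp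
qed

lemma harm_T: "harm (T K)"
  unfolding T_def
proof (rule harm_prob[OF meas_Fhy])
  fix z b \<omega> assume "0 < z" "z < N" "z \<noteq> y"
  then show "Fhy K z (b ## \<omega>) = Fhy K (step N z b) \<omega>"
    unfolding Fhy_def using absKy_Cons_ne absK_Cons_int[OF _ _ K] by simp
qed

lemma U_at_y: "U K y = p * U K (y+1) + q * U K (y-1)"
proof -
  have "U K y = p * PP (\<lambda>\<omega>. absK N K y (True ## \<omega>)) + q * PP (\<lambda>\<omega>. absK N K y (False ## \<omega>))"
    unfolding U_def by (rule first_step_int[OF pred_absK y_pos y_lt])
  also have "(\<lambda>\<omega>. absK N K y (True ## \<omega>)) = absK N K (y+1)"
    using absK_Cons_int[OF y_pos y_lt K] step_int[OF y_pos y_lt] by auto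
  also have "(\<lambda>\<omega>. absK N K y (False ## \<omega>)) = absK N K (y-1)"
    using absK_Cons_int[OF y_pos y_lt K] step_int[OF y_pos y_lt] by auto
  finally show ?thesis unfolding U_def .
qed

lemma Fodd_y_Cons: "Fodd K y (b ## \<omega>) = (\<not> odd (Vc (step N y b) \<omega>) \<and> absK N K (step N y b) \<omega>)"
proof (cases "absK N K (step N y b) \<omega>")
  case True
  then have "finite {k. rw N (step N y b) \<omega> k = y}"
    using absK_finite[OF K] y_pos y_lt by auto
  then show ?thesis unfolding Fodd_def
    using Vc_Cons_y absK_Cons_int[OF y_pos y_lt K] True by simp
next
  case False
  then show ?thesis unfolding Fodd_def using absK_Cons_int[OF y_pos y_lt K] by simp
qed

lemma O_at_y: "Od K y = p * (U K (y+1) - Od K (y+1)) + q * (U K (y-1) - Od K (y-1))"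
proof -
  have "Od K y = p * PP (\<lambda>\<omega>. Fodd K y (True ## \<omega>)) + q * PP (\<lambda>\<omega>. Fodd K y (False ## \<omega>))"
    unfolding Od_def by (rule first_step_int[where F="Fodd K" and z=y, OF meas_Fodd y_pos y_lt])
  also have "(\<lambda>\<omega>. Fodd K y (True ## \<omega>)) = (\<lambda>\<omega>. \<not> odd (Vc (y+1) \<omega>) \<and> absK N K (y+1) \<omega>)"
    using Fodd_y_Cons step_int[OF y_pos y_lt] by auto
  also have "(\<lambda>\<omega>. Fodd K y (False ## \<omega>)) = (\<lambda>\<omega>. \<not> odd (Vc (y-1) \<omega>) \<and> absK N K (y-1) \<omega>)"
    using Fodd_y_Cons step_int[OF y_pos y_lt] by auto
  also have "PP (\<lambda>\<omega>. \<not> odd (Vc (y+1) \<omega>) \<and> absK N K (y+1) \<omega>) = U K (y+1) - Od K (y+1)"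
    unfolding U_def Od_def Fodd_def by (rule pw_diff[OF meas_odd pred_absK])
  also have "PP (\<lambda>\<omega>. \<not> odd (Vc (y-1) \<omega>) \<and> absK N K (y-1) \<omega>) = U K (y-1) - Od K (y-1)"
    unfolding U_def Od_def Fodd_def by (rule pw_diff[OF meas_odd pred_absK])
  finally show ?thesis .
qed

lemma T_at_y: "T K y = U K y"
  unfolding T_def U_def Fhy_def using absKy_self by simp

lemma O_bd: "Od K 0 = 0" "Od K N = 0"
proof -
  have "Vc 0 \<omega> = 0" "Vc N \<omega> = 0" for \<omega> unfolding Vc_def using y_pos y_lt by auto
  then show "Od K 0 = 0" "Od K N = 0" unfolding Od_def Fodd_def using pw_false by simp_all
qed

lemma T_bd: "T K 0 = 0" "T K N = 0"
proof -
  have "\<not> absK N {y} 0 \<omega>" "\<not> absK N {y} N \<omega>" for \<omega> unfolding absK_def using y_pos y_lt by auto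
  then show "T K 0 = 0" "T K N = 0" unfolding T_def Fhy_def using pw_false by simp_all
qed

lemma U_bd: "U K 0 = (if 0 \<in> K then 1 else 0)" "U K N = (if N \<in> K then 1 else 0)"
  unfolding U_def absK_def using pw_true pw_false by simp_all

lemma U_y_eq: "U K y * (1 - r) = p * s * U K N + q * (1 - Lc) * U K 0"
proof -
  have "U K y = p * (U K y * (1 - s) + U K N * s) + q * (U K y * Lc + U K 0 * (1 - Lc))"
    using U_at_y harm_ym1[OF harm_U] harm_yp1[OF harm_U] by simp
  then show ?thesis unfolding r_def by (simp add: algebra_simps)
qed

lemma O_y_eq: "Od K y * (1 + r) = U K y"
proof -
  have "Od K y = p * (U K (y+1) - Od K y * (1 - s)) + q * (U K (y-1) - Od K y * Lc)"
    using O_at_y harm_ym1[OF harm_O] harm_yp1[OF harm_O] O_bd by simp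
  then have "Od K y = U K y - r * Od K y" using U_at_y unfolding r_def by (simp add: algebra_simps)
  then show ?thesis by (simp add: algebra_simps)
qed

lemma ratio:
  assumes "0 < x" "x < N" "w x \<noteq> 0" "U K y \<noteq> 0"
  shows "Od K x / T K x = 1 / (1 + r)"
proof -
  have "Od K x = Od K y * w x" using harm_w[OF harm_O O_bd] assms by simp
  moreover have "T K x = U K y * w x" using harm_w[OF harm_T T_bd] assms T_at_y by simp
  moreover have "Od K y = U K y / (1 + r)" using O_y_eq r_bounds by (simp add: field_simps)
  ultimately show ?thesis using assms r_bounds by (simp add: field_simps)
qed

end

lemma U_all: "z \<le> N \<Longrightarrow> U {0,N} z = 1"
proof -
  have K: "{0,N} \<subseteq> {0,N}" by simp
  have b: "U {0,N} 0 = 1" "U {0,N} N = 1" using U_bd[OF K] by simp_all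
  have "U {0,N} y * (1 - r) = p * s + q * (1 - Lc)" using U_y_eq[OF K] b by simp
  then have y1: "U {0,N} y = 1" using one_minus_r r_bounds by simp
  assume z: "z \<le> N"
  show "U {0,N} z = 1"
  proof (cases "z \<le> y")
    case True then show ?thesis using harm_left[OF harm_U[OF K] True] b y1 by simp
  next
    case False then show ?thesis using harm_right[OF harm_U[OF K] _ z] b y1 by simp
  qed
qed

end


lemma enat_lt_ne_inf: "(a::enat) < b \<Longrightarrow> a \<noteq> \<infinity>"
  by (metis enat_ord_simps(6))

lemma hit_gt:
  assumes k: "rw N x \<omega> k = y" and y: "y \<noteq> 0" "y \<noteq> N" and a: "a \<in> {0,N}"
  shows "enat k < hit N x \<omega> a"
proof (cases "\<exists>n\<ge>1. rw N x \<omega> n = a")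
  case True
  define m where "m = (LEAST n. n \<ge> 1 \<and> rw N x \<omega> n = a)"
  have m: "rw N x \<omega> m = a" using LeastI_ex[OF True] unfolding m_def by blast
  have "k < m"
  proof (rule ccontr)
    assume "\<not> k < m"
    then have "rw N x \<omega> k = rw N x \<omega> m" using m a by (intro rw_absorb') auto
    then show False using k m a y by auto
  qed
  then show ?thesis using True by (simp add: hit_def m_def)
qed (auto simp: hit_def)

lemma hit_fin:
  assumes "hit N x \<omega> a \<noteq> \<infinity>"
  shows "absK N {a} x \<omega>"
  using assms unfolding hit_def absK_def by (auto split: if_splits)

lemma hit_le:
  assumes "rw N x \<omega> k = a" "1 \<le> k"
  shows "hit N x \<omega> a \<le> enat k"
proof -
  have ex: "\<exists>n\<ge>1. rw N x \<omega> n = a" using assms by blast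
  have "(LEAST n. n \<ge> 1 \<and> rw N x \<omega> n = a) \<le> k" using assms by (intro Least_le) auto
  then show ?thesis using ex by (simp add: hit_def)
qed

lemma hit_fin_absK:
  assumes "absK N {a} x \<omega>" "a \<noteq> x"
  shows "hit N x \<omega> a < \<infinity>"
proof -
  obtain k where k: "rw N x \<omega> k = a" using assms unfolding absK_def by auto
  have "k \<noteq> 0"
  proof
    assume "k = 0" then show False using k assms(2) by simp
  qed
  then have "hit N x \<omega> a \<le> enat k" using hit_le[OF k] by simp
  then show ?thesis using enat_ord_simps(4) le_less_trans by blast
qed

lemma hit_inf:
  assumes "absK N {b} x \<omega>" "a \<in> {0,N}" "b \<in> {0,N}" "a \<noteq> b"
  shows "hit N x \<omega> a = \<infinity>"
proof (rule ccontr)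
  assume "hit N x \<omega> a \<noteq> \<infinity>"
  then obtain n where n: "rw N x \<omega> n = a" using hit_fin unfolding absK_def by blast
  obtain m where m: "rw N x \<omega> m = b" using assms unfolding absK_def by blast
  show False
  proof (cases "n \<le> m")
    case True then have "rw N x \<omega> m = rw N x \<omega> n" using n assms by (intro rw_absorb') auto
    then show False using n m assms by auto
  next
    case False then have "rw N x \<omega> n = rw N x \<omega> m" using m assms by (intro rw_absorb') auto
    then show False using n m assms by auto
  qed
qed

lemma visits_eq:
  assumes "0 < y" "y < N"
  shows "visits N x \<omega> y = card {k. rw N x \<omega> k = y}"
proof -
  have "{k. enat k \<le> exit_time N x \<omega> \<and> rw N x \<omega> k = y} = {k. rw N x \<omega> k = y}"
  proof (intro Collect_cong iffI)
    fix k assume k: "rw N x \<omega> k = y"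
    have "enat k < hit N x \<omega> 0" "enat k < hit N x \<omega> N" using hit_gt[OF k] assms by auto
    then show "enat k \<le> exit_time N x \<omega> \<and> rw N x \<omega> k = y" using k by (auto simp: exit_time_def intro: less_imp_le)
  qed simp
  then show ?thesis by (simp add: visits_def)
qed

context walkN begin

context
  fixes x assumes x: "0 < x" "x < N" "x \<noteq> y"
begin

lemma odd_absy: "odd (Vc x \<omega>) \<Longrightarrow> absK N {y} x \<omega>"
  unfolding Vc_def absK_def by (metis (mono_tags) Collect_empty_eq card.empty odd_card_imp_not_empty singletonI)

lemma vis_Vc: "visits N x \<omega> y = Vc x \<omega>"
  unfolding Vc_def using visits_eq y_pos y_lt by simp

lemma E1: "(hit N x \<omega> y < hit N x \<omega> N \<and> hit N x \<omega> N < hit N x \<omega> 0) \<longleftrightarrow> Fhy {N} x \<omega>"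
proof
  assume "hit N x \<omega> y < hit N x \<omega> N \<and> hit N x \<omega> N < hit N x \<omega> 0"
  then have "hit N x \<omega> y \<noteq> \<infinity>" "hit N x \<omega> N \<noteq> \<infinity>" using enat_lt_ne_inf by blast+
  then show "Fhy {N} x \<omega>" unfolding Fhy_def using hit_fin by blast
next
  assume F: "Fhy {N} x \<omega>"
  then obtain k where k: "rw N x \<omega> k = y" unfolding Fhy_def absK_def by auto
  have "k \<noteq> 0"
  proof
    assume "k = 0" with k x(3) show False by simp
  qed
  then have "hit N x \<omega> y \<le> enat k" using hit_le[OF k] by simp
  moreover have "enat k < hit N x \<omega> N" using hit_gt[OF k] y_pos y_lt by auto
  moreover have "hit N x \<omega> 0 = \<infinity>" using F y_lt unfolding Fhy_def by (intro hit_inf[of N N]) auto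
  moreover have "hit N x \<omega> N < \<infinity>" using F x unfolding Fhy_def by (intro hit_fin_absK) auto
  ultimately show "hit N x \<omega> y < hit N x \<omega> N \<and> hit N x \<omega> N < hit N x \<omega> 0" by auto
qed

lemma E2: "(hit N x \<omega> y < hit N x \<omega> 0 \<and> hit N x \<omega> 0 < hit N x \<omega> N) \<longleftrightarrow> Fhy {0} x \<omega>"
proof
  assume "hit N x \<omega> y < hit N x \<omega> 0 \<and> hit N x \<omega> 0 < hit N x \<omega> N"
  then have "hit N x \<omega> y \<noteq> \<infinity>" "hit N x \<omega> 0 \<noteq> \<infinity>" using enat_lt_ne_inf by blast+
  then show "Fhy {0} x \<omega>" unfolding Fhy_def using hit_fin by blast
next
  assume F: "Fhy {0} x \<omega>"
  then obtain k where k: "rw N x \<omega> k = y" unfolding Fhy_def absK_def by auto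
  have "k \<noteq> 0"
  proof
    assume "k = 0" with k x(3) show False by simp
  qed
  then have "hit N x \<omega> y \<le> enat k" using hit_le[OF k] by simp
  moreover have "enat k < hit N x \<omega> 0" using hit_gt[OF k] y_pos y_lt by auto
  moreover have "hit N x \<omega> N = \<infinity>" using F y_lt unfolding Fhy_def by (intro hit_inf[of N 0]) auto
  moreover have "hit N x \<omega> 0 < \<infinity>" using F x unfolding Fhy_def by (intro hit_fin_absK) auto
  ultimately show "hit N x \<omega> y < hit N x \<omega> 0 \<and> hit N x \<omega> 0 < hit N x \<omega> N" by auto
qed

lemma E3: "hit N x \<omega> y < exit_time N x \<omega> \<longleftrightarrow> absK N {y} x \<omega>"
proof
  assume "hit N x \<omega> y < exit_time N x \<omega>"
  then have "hit N x \<omega> y \<noteq> \<infinity>" using enat_lt_ne_inf by blast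
  then show "absK N {y} x \<omega>" using hit_fin by blast
next
  assume F: "absK N {y} x \<omega>"
  then obtain k where k: "rw N x \<omega> k = y" unfolding absK_def by auto
  have "k \<noteq> 0"
  proof
    assume "k = 0" with k x(3) show False by simp
  qed
  then have "hit N x \<omega> y \<le> enat k" using hit_le[OF k] by simp
  moreover have "enat k < hit N x \<omega> 0" "enat k < hit N x \<omega> N" using hit_gt[OF k] y_pos y_lt by auto
  ultimately have "hit N x \<omega> y < hit N x \<omega> 0" "hit N x \<omega> y < hit N x \<omega> N"
    using le_less_trans by blast+
  then show "hit N x \<omega> y < exit_time N x \<omega>" by (simp add: exit_time_def)
qed

lemma C1: "walk_cond_prob (walk_space p) (\<lambda>\<omega>. odd (visits N x \<omega> y))
   (\<lambda>\<omega>. hit N x \<omega> y < hit N x \<omega> N \<and> hit N x \<omega> N < hit N x \<omega> 0) = Od {N} x / T {N} x"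
proof -
  have "(\<lambda>\<omega>. odd (visits N x \<omega> y) \<and> (hit N x \<omega> y < hit N x \<omega> N \<and> hit N x \<omega> N < hit N x \<omega> 0)) = Fodd {N} x"
    using E1 odd_absy unfolding Fodd_def Fhy_def vis_Vc by blast
  moreover have "(\<lambda>\<omega>. hit N x \<omega> y < hit N x \<omega> N \<and> hit N x \<omega> N < hit N x \<omega> 0) = Fhy {N} x"
    using E1 by blast
  ultimately show ?thesis unfolding walk_cond_prob_def Od_def T_def by simp
qed

lemma C2: "walk_cond_prob (walk_space p) (\<lambda>\<omega>. odd (visits N x \<omega> y))
   (\<lambda>\<omega>. hit N x \<omega> y < hit N x \<omega> 0 \<and> hit N x \<omega> 0 < hit N x \<omega> N) = Od {0} x / T {0} x"
proof -
  have "(\<lambda>\<omega>. odd (visits N x \<omega> y) \<and> (hit N x \<omega> y < hit N x \<omega> 0 \<and> hit N x \<omega> 0 < hit N x \<omega> N)) = Fodd {0} x"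
    using E2 odd_absy unfolding Fodd_def Fhy_def vis_Vc by blast
  moreover have "(\<lambda>\<omega>. hit N x \<omega> y < hit N x \<omega> 0 \<and> hit N x \<omega> 0 < hit N x \<omega> N) = Fhy {0} x"
    using E2 by blast
  ultimately show ?thesis unfolding walk_cond_prob_def Od_def T_def by simp
qed

lemma C4: "prob_of (walk_space p) (\<lambda>\<omega>. odd (visits N x \<omega> y)) = Od {0,N} x"
proof -
  have "Od {0,N} x = PP (\<lambda>\<omega>. odd (Vc x \<omega>) \<and> absK N {0,N} x \<omega>)" unfolding Od_def Fodd_def ..
  also have "\<dots> = PP (\<lambda>\<omega>. odd (Vc x \<omega>))"
    using U_all[of x] x unfolding U_def by (intro pw_full meas_odd pred_absK) auto
  finally show ?thesis unfolding vis_Vc by simp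
qed

lemma C3: "walk_cond_prob (walk_space p) (\<lambda>\<omega>. odd (visits N x \<omega> y))
   (\<lambda>\<omega>. hit N x \<omega> y < exit_time N x \<omega>) = Od {0,N} x / T {0,N} x"
proof -
  have "(\<lambda>\<omega>. odd (visits N x \<omega> y) \<and> hit N x \<omega> y < exit_time N x \<omega>) = (\<lambda>\<omega>. odd (visits N x \<omega> y))"
    using E3 odd_absy unfolding vis_Vc by blast
  moreover have "(\<lambda>\<omega>. hit N x \<omega> y < exit_time N x \<omega>) = absK N {y} x"
    using E3 by blast
  moreover have "T {0,N} x = PP (absK N {y} x)"
    using U_all[of x] x unfolding U_def T_def Fhy_def by (intro pw_full pred_absK) auto
  ultimately show ?thesis unfolding walk_cond_prob_def using C4 by simp
qed

end

lemma Lc_lt: "0 < \<rho> \<Longrightarrow> Lc < 1"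
proof -
  assume rp: "0 < \<rho>"
  have "Sg \<rho> y = Sg \<rho> (y-1) + \<rho>^(y-1)" using y_pos Sg_Suc[of \<rho> "y-1"] by simp
  moreover have "0 < \<rho>^(y-1)" using rp by simp
  ultimately show ?thesis using SgY by (simp add: Lc_def field_simps)
qed

lemma main_i:
  assumes x: "0 < x" "x < N" "x \<noteq> y" and q: "0 < q"
  shows "walk_cond_prob (walk_space p) (\<lambda>\<omega>. odd (visits N x \<omega> y))
     (\<lambda>\<omega>. hit N x \<omega> y < hit N x \<omega> N \<and> hit N x \<omega> N < hit N x \<omega> 0) = 1 / (1 + r)"
    "walk_cond_prob (walk_space p) (\<lambda>\<omega>. odd (visits N x \<omega> y))
     (\<lambda>\<omega>. hit N x \<omega> y < hit N x \<omega> 0 \<and> hit N x \<omega> 0 < hit N x \<omega> N) = 1 / (1 + r)"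
    "walk_cond_prob (walk_space p) (\<lambda>\<omega>. odd (visits N x \<omega> y))
     (\<lambda>\<omega>. hit N x \<omega> y < exit_time N x \<omega>) = 1 / (1 + r)"
proof -
  have rp: "0 < \<rho>" using q p_pos by (simp add: \<rho>_def)
  have wx: "w x \<noteq> 0" using w_pos[OF x(1,2)] rp by auto
  have r1: "0 < 1 - r" using r_bounds by simp
  have "U {N} y * (1 - r) = p * s" using U_y_eq[of "{N}"] U_bd[of "{N}"] y_lt by simp
  then have UN: "U {N} y \<noteq> 0" using p_pos s_bounds by auto
  have "U {0} y * (1 - r) = q * (1 - Lc)" using U_y_eq[of "{0}"] U_bd[of "{0}"] y_lt by simp
  then have U0: "U {0} y \<noteq> 0" using q Lc_lt[OF rp] by auto
  have UA: "U {0,N} y \<noteq> 0" using U_all[of y] y_lt by simp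
  show "walk_cond_prob (walk_space p) (\<lambda>\<omega>. odd (visits N x \<omega> y))
     (\<lambda>\<omega>. hit N x \<omega> y < hit N x \<omega> N \<and> hit N x \<omega> N < hit N x \<omega> 0) = 1 / (1 + r)"
    using C1[OF x] ratio[of "{N}" x] x wx UN by simp
  show "walk_cond_prob (walk_space p) (\<lambda>\<omega>. odd (visits N x \<omega> y))
     (\<lambda>\<omega>. hit N x \<omega> y < hit N x \<omega> 0 \<and> hit N x \<omega> 0 < hit N x \<omega> N) = 1 / (1 + r)"
    using C2[OF x] ratio[of "{0}" x] x wx U0 by simp
  show "walk_cond_prob (walk_space p) (\<lambda>\<omega>. odd (visits N x \<omega> y))
     (\<lambda>\<omega>. hit N x \<omega> y < exit_time N x \<omega>) = 1 / (1 + r)"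
    using C3[OF x] ratio[of "{0,N}" x] x wx UA by simp
qed

lemma main_ii:
  assumes x: "0 < x" "x < y"
  shows "prob_of (walk_space p) (\<lambda>\<omega>. odd (visits N x \<omega> y)) = w x / (1 + r)"
proof -
  have K: "{0,N} \<subseteq> {0,N}" by simp
  have x': "0 < x" "x < N" "x \<noteq> y" using x y_lt by auto
  have "Od {0,N} x = Od {0,N} y * w x" using harm_w[OF harm_O[OF K] O_bd[OF K]] x' by simp
  moreover have "Od {0,N} y = 1 / (1 + r)" using O_y_eq[OF K] U_all[of y] y_lt r_bounds
    by (simp add: field_simps)
  ultimately show ?thesis using C4[OF x'] by simp
qed

end


lemma Sg_lower:
  assumes "0 \<le> \<rho>" "\<rho> \<le> 1" "m \<le> k" "(1 - \<rho>) * real m \<le> 1/2"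
  shows "real m / 2 \<le> Sg \<rho> k"
proof -
  have b: "1 + real m * (\<rho> - 1) \<le> (1 + (\<rho> - 1)) ^ m"
    by (rule Bernoulli_inequality) (use assms in simp)
  have "\<rho> ^ m \<ge> 1/2" using b assms(4) by (simp add: algebra_simps)
  have "(\<Sum>j<m. \<rho> ^ m) \<le> (\<Sum>j<m. \<rho> ^ j)"
    using assms by (intro sum_mono power_decreasing) auto
  then have "real m * \<rho> ^ m \<le> Sg \<rho> m" by (simp add: Sg_def)
  moreover have "Sg \<rho> m \<le> Sg \<rho> k" using assms by (intro Sg_mono) auto
  moreover have "real m * (1/2) \<le> real m * \<rho> ^ m" using \<open>\<rho> ^ m \<ge> 1/2\<close>
    by (intro mult_left_mono) auto
  ultimately show ?thesis by linarith
qed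

lemma ipart_bounds:
  assumes "0 \<le> a"
  shows "a * real N - 1 < real (ipart a N)" "real (ipart a N) \<le> a * real N"
proof -
  have f: "real_of_int \<lfloor>a * real N\<rfloor> \<le> a * real N" "a * real N < real_of_int \<lfloor>a * real N\<rfloor> + 1"
    by linarith+
  have "0 \<le> \<lfloor>a * real N\<rfloor>" using assms by simp
  then have e: "real (ipart a N) = real_of_int \<lfloor>a * real N\<rfloor>" by (simp add: ipart_def)
  show "a * real N - 1 < real (ipart a N)" "real (ipart a N) \<le> a * real N" using e f by linarith+
qed

lemma ev_real:
  assumes "0 < \<gamma>"
  shows "eventually (\<lambda>N. B \<le> \<gamma> * real N) sequentially"
proof -
  have "\<forall>N\<ge>nat \<lceil>B/\<gamma>\<rceil>. B \<le> \<gamma> * real N"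
  proof (intro allI impI)
    fix N assume "nat \<lceil>B/\<gamma>\<rceil> \<le> N"
    then have "B/\<gamma> \<le> real N" using real_nat_ceiling_ge[of "B/\<gamma>"] by linarith
    then show "B \<le> \<gamma> * real N" using assms by (simp add: field_simps)
  qed
  then show ?thesis unfolding eventually_sequentially by blast
qed

lemma filterlim_lin:
  assumes "0 < \<gamma>" "\<And>N. \<gamma> * real N - C \<le> real (k N)"
  shows "filterlim k at_top sequentially"
  unfolding filterlim_at_top
proof
  fix Z :: nat
  show "eventually (\<lambda>N. Z \<le> k N) sequentially"
    using ev_real[OF assms(1), of "real Z + C"]
  proof (rule eventually_mono)
    fix N assume "real Z + C \<le> \<gamma> * real N"
    then have "real Z \<le> real (k N)" using assms(2)[of N] by linarith
    then show "Z \<le> k N" by simp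
  qed
qed

definition pN :: "real \<Rightarrow> nat \<Rightarrow> real" where "pN c N = 1/2 + c / real N"

lemma Sg_at_top_weak:
  assumes c: "0 \<le> c" and k: "filterlim k at_top sequentially"
  shows "filterlim (\<lambda>N. Sg ((1 - pN c N) / pN c N) (k N)) at_top sequentially"
  unfolding filterlim_at_top
proof
  fix Z :: real
  define m where "m = nat \<lceil>2 * Z\<rceil>"
  have ev1: "eventually (\<lambda>N. m \<le> k N) sequentially" using k unfolding filterlim_at_top by blast
  have ev2: "eventually (\<lambda>N. 8 * c * real m + 2 * c + 1 \<le> 1 * real N) sequentially"
    by (rule ev_real) simp
  show "eventually (\<lambda>N. Z \<le> Sg ((1 - pN c N) / pN c N) (k N)) sequentially"
    using ev1 ev2
  proof eventually_elim
    case (elim N)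
    have Npos: "0 < real N" using elim c by (smt (verit) of_nat_0_le_iff mult_nonneg_nonneg)
    define t where "t = c / real N"
    have t: "0 \<le> t" "2 * t \<le> 1" "8 * t * real m \<le> 1"
    proof -
      show "0 \<le> t" using c Npos by (simp add: t_def)
      have "2 * c \<le> real N" using elim c by (smt (verit) of_nat_0_le_iff mult_nonneg_nonneg)
      then show "2 * t \<le> 1" using Npos by (simp add: t_def field_simps)
      have "8 * c * real m \<le> real N" using elim c by linarith
      then show "8 * t * real m \<le> 1" using Npos by (simp add: t_def field_simps)
    qed
    have p: "pN c N = 1/2 + t" by (simp add: pN_def t_def)
    define \<rho> where "\<rho> = (1 - pN c N) / pN c N"
    have \<rho>: "\<rho> = (1/2 - t) / (1/2 + t)" unfolding \<rho>_def p by simp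
    have r0: "0 \<le> \<rho>" unfolding \<rho> using t by (intro divide_nonneg_pos) auto
    have r1: "\<rho> \<le> 1" unfolding \<rho> using t by simp
    have "1 - \<rho> = 2 * t / (1/2 + t)" unfolding \<rho> using t by (simp add: field_simps)
    also have "\<dots> \<le> 4 * t" using t by (simp add: field_simps)
    finally have "(1 - \<rho>) * real m \<le> 4 * t * real m" by (simp add: mult_right_mono)
    then have "(1 - \<rho>) * real m \<le> 1/2" using t by linarith
    then have "real m / 2 \<le> Sg \<rho> (k N)" using Sg_lower[OF r0 r1 elim(1)] by simp
    moreover have "Z \<le> real m / 2" unfolding m_def by linarith
    ultimately show ?case unfolding \<rho>_def by linarith
  qed
qed


context walkN begin

lemma one_minus_r_le:
  assumes "\<rho> \<le> 1"
  shows "1 - r \<le> 1 / Sg \<rho> (N-y) + 1 / Sg \<rho> y"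
proof -
  have Sy: "Sg \<rho> y = Sg \<rho> (y-1) + \<rho>^(y-1)" using y_pos Sg_Suc[of \<rho> "y-1"] by simp
  have "1 - Lc = \<rho>^(y-1) / Sg \<rho> y" using SgY Sy by (simp add: Lc_def field_simps)
  also have "\<dots> \<le> 1 / Sg \<rho> y" using SgY assms rho_ge
    by (intro divide_right_mono power_le_one) auto
  finally have l: "1 - Lc \<le> 1 / Sg \<rho> y" .
  have "p * s \<le> s" using p_le s_bounds by (simp add: mult_left_le_one_le)
  moreover have "q * (1 - Lc) \<le> 1 - Lc" using q_ge Lc_bounds p_pos
    by (intro mult_left_le_one_le) (auto simp: q_def)
  ultimately show ?thesis using one_minus_r l by (simp add: s_def)
qed

lemma rho_eq: "\<rho> = (1 - p) / p" by (simp add: \<rho>_def q_def)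

lemma r_eq: "r = p * (1 - 1 / Sg \<rho> (N-y)) + (1 - p) * (Sg \<rho> (y-1) / Sg \<rho> y)"
  by (simp add: r_def s_def q_def Lc_def)

lemma w_le: "x \<le> y \<Longrightarrow> w x = Sg \<rho> x / Sg \<rho> y" by (simp add: w_def)

end

lemma walkN_I: "0 < p \<Longrightarrow> p \<le> 1 \<Longrightarrow> 0 < y \<Longrightarrow> y < N \<Longrightarrow> walkN p N y"
  by (simp add: walkN_def)

lemma Sg_lim:
  assumes "0 \<le> \<rho>" "\<rho> < 1" "filterlim k at_top sequentially"
  shows "(\<lambda>N. Sg \<rho> (k N)) \<longlonglongrightarrow> 1 / (1 - \<rho>)"
proof -
  have e: "Sg \<rho> (k N) = (1 - \<rho> ^ k N) / (1 - \<rho>)" for N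
    using assms unfolding Sg_def by (simp add: sum_gp_strict)
  have "(\<lambda>N. \<rho> ^ k N) \<longlonglongrightarrow> 0" using assms by (intro tendsto_power_zero) auto
  then have "(\<lambda>N. (1 - \<rho> ^ k N) / (1 - \<rho>)) \<longlonglongrightarrow> (1 - 0) / (1 - \<rho>)"
    using assms(2) by (intro tendsto_divide tendsto_diff tendsto_const) auto
  then show ?thesis unfolding e by simp
qed


lemma ev_conds_i:
  fixes \<alpha> \<beta> c :: real
  assumes "0 < \<alpha>" "\<alpha> < 1" "0 < \<beta>" "\<beta> < 1" "\<alpha> \<noteq> \<beta>" "0 \<le> c"
  shows "eventually (\<lambda>N. 0 < pN c N \<and> pN c N < 1 \<and> 1/2 \<le> pN c N \<and> 0 < ipart \<beta> N \<and> ipart \<beta> N < N \<and>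
      0 < ipart \<alpha> N \<and> ipart \<alpha> N < N \<and> ipart \<alpha> N \<noteq> ipart \<beta> N) sequentially"
proof -
  have ab: "0 < \<bar>\<alpha> - \<beta>\<bar>" using assms by simp
  show ?thesis
    using ev_real[OF assms(1), of 1] ev_real[OF assms(3), of 1] ev_real[OF ab, of 1]
      ev_real[OF zero_less_one, of "2*c+1"]
  proof eventually_elim
    case (elim N)
    have Np: "0 < real N" using elim assms by linarith
    have xb: "\<alpha> * real N - 1 < real (ipart \<alpha> N)" "real (ipart \<alpha> N) \<le> \<alpha> * real N"
      using ipart_bounds[of \<alpha> N] assms by auto
    have yb: "\<beta> * real N - 1 < real (ipart \<beta> N)" "real (ipart \<beta> N) \<le> \<beta> * real N"
      using ipart_bounds[of \<beta> N] assms by auto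
    have an: "\<alpha> * real N < real N" "\<beta> * real N < real N" using assms Np by simp_all
    have "0 < real (ipart \<beta> N)" "real (ipart \<beta> N) < real N"
      "0 < real (ipart \<alpha> N)" "real (ipart \<alpha> N) < real N"
      using xb yb elim an by linarith+
    then have 1: "0 < ipart \<beta> N \<and> ipart \<beta> N < N \<and> 0 < ipart \<alpha> N \<and> ipart \<alpha> N < N"
      by (simp only: of_nat_less_iff of_nat_0_less_iff)
    have 2: "ipart \<alpha> N \<noteq> ipart \<beta> N"
    proof (cases "\<alpha> < \<beta>")
      case True
      then have "1 \<le> (\<beta> - \<alpha>) * real N" using elim by simp
      then have "real (ipart \<alpha> N) < real (ipart \<beta> N)" using xb yb by (simp add: algebra_simps)
      then show ?thesis by simp
    next
      case False
      then have "1 \<le> (\<alpha> - \<beta>) * real N" using elim by simp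
      then have "real (ipart \<beta> N) < real (ipart \<alpha> N)" using xb yb by (simp add: algebra_simps)
      then show ?thesis by simp
    qed
    have "c / real N < 1/2" using elim Np by (simp add: field_simps)
    moreover have "0 \<le> c / real N" using assms Np by simp
    ultimately have 3: "0 < pN c N \<and> pN c N < 1 \<and> 1/2 \<le> pN c N" unfolding pN_def by linarith
    show ?case using 1 2 3 by blast
  qed
qed

lemma part_i:
  fixes \<alpha> \<beta> c :: real
  assumes as: "0 < \<alpha>" "\<alpha> < 1" "0 < \<beta>" "\<beta> < 1" "\<alpha> \<noteq> \<beta>" and c: "0 \<le> c"
  shows
    "((\<lambda>N. walk_cond_prob (walk_space (1/2 + c / real N))
               (\<lambda>\<omega>. odd (visits N (ipart \<alpha> N) \<omega> (ipart \<beta> N)))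
               (\<lambda>\<omega>. hit N (ipart \<alpha> N) \<omega> (ipart \<beta> N) < hit N (ipart \<alpha> N) \<omega> N
                   \<and> hit N (ipart \<alpha> N) \<omega> N < hit N (ipart \<alpha> N) \<omega> 0))
          \<longlonglongrightarrow> 1/2)
     \<and> ((\<lambda>N. walk_cond_prob (walk_space (1/2 + c / real N))
               (\<lambda>\<omega>. odd (visits N (ipart \<alpha> N) \<omega> (ipart \<beta> N)))
               (\<lambda>\<omega>. hit N (ipart \<alpha> N) \<omega> (ipart \<beta> N) < hit N (ipart \<alpha> N) \<omega> 0
                   \<and> hit N (ipart \<alpha> N) \<omega> 0 < hit N (ipart \<alpha> N) \<omega> N))
          \<longlonglongrightarrow> 1/2)
     \<and> ((\<lambda>N. walk_cond_prob (walk_space (1/2 + c / real N))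
               (\<lambda>\<omega>. odd (visits N (ipart \<alpha> N) \<omega> (ipart \<beta> N)))
               (\<lambda>\<omega>. hit N (ipart \<alpha> N) \<omega> (ipart \<beta> N) < exit_time N (ipart \<alpha> N) \<omega>))
          \<longlonglongrightarrow> 1/2)"
proof -
  define R where "R N = walkN.r (pN c N) N (ipart \<beta> N)" for N
  define u where "u N = 1 / Sg ((1 - pN c N) / pN c N) (N - ipart \<beta> N) + 1 / Sg ((1 - pN c N) / pN c N) (ipart \<beta> N)" for N
  note ev = ev_conds_i[OF as c]
  have ev2: "eventually (\<lambda>N. R N \<le> 1 \<and> 1 - u N \<le> R N \<and>
     walk_cond_prob (walk_space (1/2 + c / real N))
               (\<lambda>\<omega>. odd (visits N (ipart \<alpha> N) \<omega> (ipart \<beta> N)))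
               (\<lambda>\<omega>. hit N (ipart \<alpha> N) \<omega> (ipart \<beta> N) < hit N (ipart \<alpha> N) \<omega> N
                   \<and> hit N (ipart \<alpha> N) \<omega> N < hit N (ipart \<alpha> N) \<omega> 0) = 1 / (1 + R N) \<and>
     walk_cond_prob (walk_space (1/2 + c / real N))
               (\<lambda>\<omega>. odd (visits N (ipart \<alpha> N) \<omega> (ipart \<beta> N)))
               (\<lambda>\<omega>. hit N (ipart \<alpha> N) \<omega> (ipart \<beta> N) < hit N (ipart \<alpha> N) \<omega> 0
                   \<and> hit N (ipart \<alpha> N) \<omega> 0 < hit N (ipart \<alpha> N) \<omega> N) = 1 / (1 + R N) \<and>
     walk_cond_prob (walk_space (1/2 + c / real N))
               (\<lambda>\<omega>. odd (visits N (ipart \<alpha> N) \<omega> (ipart \<beta> N)))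
               (\<lambda>\<omega>. hit N (ipart \<alpha> N) \<omega> (ipart \<beta> N) < exit_time N (ipart \<alpha> N) \<omega>) = 1 / (1 + R N)) sequentially"
    using ev
  proof eventually_elim
    case (elim N)
    interpret W: walkN "pN c N" N "ipart \<beta> N" by (rule walkN_I) (use elim in auto)
    have q: "0 < W.q" using elim by (simp add: W.q_def)
    have x: "0 < ipart \<alpha> N" "ipart \<alpha> N < N" "ipart \<alpha> N \<noteq> ipart \<beta> N" using elim by auto
    have rho1: "W.\<rho> \<le> 1" using elim by (simp add: W.rho_eq)
    have "R N = W.r" by (simp add: R_def)
    moreover have "u N = 1 / Sg W.\<rho> (N - ipart \<beta> N) + 1 / Sg W.\<rho> (ipart \<beta> N)"
      by (simp add: u_def W.rho_eq)
    ultimately show ?case using W.main_i[OF x q] W.r_bounds W.one_minus_r_le[OF rho1]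
      by (simp add: pN_def)
  qed
  have kY: "filterlim (\<lambda>N. ipart \<beta> N) at_top sequentially"
  proof (rule filterlim_lin[OF as(3), of 1])
    fix N show "\<beta> * real N - 1 \<le> real (ipart \<beta> N)" using ipart_bounds(1)[of \<beta> N] as by simp
  qed
  have kNY: "filterlim (\<lambda>N. N - ipart \<beta> N) at_top sequentially"
  proof (rule filterlim_lin[of "1 - \<beta>" 0])
    show "0 < 1 - \<beta>" using as by simp
    fix N
    have "real (ipart \<beta> N) \<le> \<beta> * real N" using ipart_bounds[of \<beta> N] as by simp
    moreover have "\<beta> * real N \<le> real N" using as by (simp add: mult_left_le_one_le)
    ultimately have "ipart \<beta> N \<le> N" by linarith
    then have "real (N - ipart \<beta> N) = real N - real (ipart \<beta> N)" by simp
    then show "(1 - \<beta>) * real N - 0 \<le> real (N - ipart \<beta> N)"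
      using \<open>real (ipart \<beta> N) \<le> \<beta> * real N\<close> by (simp add: algebra_simps)
  qed
  have u0: "u \<longlonglongrightarrow> 0"
  proof -
    have "(\<lambda>N. inverse (Sg ((1 - pN c N) / pN c N) (N - ipart \<beta> N)) + inverse (Sg ((1 - pN c N) / pN c N) (ipart \<beta> N))) \<longlonglongrightarrow> 0 + 0"
      by (intro tendsto_add tendsto_inverse_0_at_top Sg_at_top_weak[OF c] kY kNY)
    then show ?thesis unfolding u_def by (simp add: inverse_eq_divide)
  qed
  have R1: "R \<longlonglongrightarrow> 1"
  proof (rule tendsto_sandwich[of "\<lambda>N. 1 - u N" _ _ "\<lambda>_. 1"])
    show "eventually (\<lambda>N. 1 - u N \<le> R N) sequentially" using ev2 by (rule eventually_mono) simp
    show "eventually (\<lambda>N. R N \<le> 1) sequentially" using ev2 by (rule eventually_mono) simp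
    show "(\<lambda>N. 1 - u N) \<longlonglongrightarrow> 1" using tendsto_diff[OF tendsto_const u0, of 1] by simp
  qed simp
  have L: "(\<lambda>N. 1 / (1 + R N)) \<longlonglongrightarrow> 1/2"
    using tendsto_divide[OF tendsto_const tendsto_add[OF tendsto_const R1], of 1 1] by simp
  show ?thesis
  proof (intro conjI)
    show "(\<lambda>N. walk_cond_prob (walk_space (1/2 + c / real N))
               (\<lambda>\<omega>. odd (visits N (ipart \<alpha> N) \<omega> (ipart \<beta> N)))
               (\<lambda>\<omega>. hit N (ipart \<alpha> N) \<omega> (ipart \<beta> N) < hit N (ipart \<alpha> N) \<omega> N
                   \<and> hit N (ipart \<alpha> N) \<omega> N < hit N (ipart \<alpha> N) \<omega> 0)) \<longlonglongrightarrow> 1/2"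
      by (rule Lim_transform_eventually[OF L]) (use ev2 in \<open>auto elim: eventually_mono\<close>)
    show "(\<lambda>N. walk_cond_prob (walk_space (1/2 + c / real N))
               (\<lambda>\<omega>. odd (visits N (ipart \<alpha> N) \<omega> (ipart \<beta> N)))
               (\<lambda>\<omega>. hit N (ipart \<alpha> N) \<omega> (ipart \<beta> N) < hit N (ipart \<alpha> N) \<omega> 0
                   \<and> hit N (ipart \<alpha> N) \<omega> 0 < hit N (ipart \<alpha> N) \<omega> N)) \<longlonglongrightarrow> 1/2"
      by (rule Lim_transform_eventually[OF L]) (use ev2 in \<open>auto elim: eventually_mono\<close>)
    show "(\<lambda>N. walk_cond_prob (walk_space (1/2 + c / real N))
               (\<lambda>\<omega>. odd (visits N (ipart \<alpha> N) \<omega> (ipart \<beta> N)))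
               (\<lambda>\<omega>. hit N (ipart \<alpha> N) \<omega> (ipart \<beta> N) < exit_time N (ipart \<alpha> N) \<omega>)) \<longlonglongrightarrow> 1/2"
      by (rule Lim_transform_eventually[OF L]) (use ev2 in \<open>auto elim: eventually_mono\<close>)
  qed
qed


lemma part_ii:
  fixes \<alpha> \<beta> p q :: real
  assumes as: "0 < \<alpha>" "\<alpha> < \<beta>" "\<beta> < 1" and pq: "0 \<le> q" "q < p" "p + q = 1"
  shows "(\<lambda>N. prob_of (walk_space p) (\<lambda>\<omega>. odd (visits N (ipart \<alpha> N) \<omega> (ipart \<beta> N))))
          \<longlonglongrightarrow> 1 / (2 - (p - q))"
proof -
  define \<rho> where "\<rho> = (1 - p) / p"
  have p0: "0 < p" "p \<le> 1" using pq by auto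
  have r0: "0 \<le> \<rho>" "\<rho> < 1" using pq by (auto simp: \<rho>_def field_simps)
  have b0: "0 < \<beta>" using as by simp
  define L where "L = 1 / (1 - \<rho>)"
  have L0: "0 < L" using r0 by (simp add: L_def)
  define F where "F N = (Sg \<rho> (ipart \<alpha> N) / Sg \<rho> (ipart \<beta> N)) /
     (1 + (p * (1 - 1 / Sg \<rho> (N - ipart \<beta> N)) + (1 - p) * (Sg \<rho> (ipart \<beta> N - 1) / Sg \<rho> (ipart \<beta> N))))" for N
  have ab: "0 < \<beta> - \<alpha>" using as by simp
  have ev: "eventually (\<lambda>N. prob_of (walk_space p) (\<lambda>\<omega>. odd (visits N (ipart \<alpha> N) \<omega> (ipart \<beta> N))) = F N) sequentially"
    using ev_real[OF as(1), of 1] ev_real[OF ab, of 1] ev_real[OF zero_less_one, of 1]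
  proof eventually_elim
    case (elim N)
    have xb: "\<alpha> * real N - 1 < real (ipart \<alpha> N)" "real (ipart \<alpha> N) \<le> \<alpha> * real N"
      using ipart_bounds[of \<alpha> N] as by auto
    have yb: "\<beta> * real N - 1 < real (ipart \<beta> N)" "real (ipart \<beta> N) \<le> \<beta> * real N"
      using ipart_bounds[of \<beta> N] as by auto
    have bn: "\<beta> * real N < real N" using as elim by simp
    have "0 < real (ipart \<alpha> N)" "real (ipart \<alpha> N) < real (ipart \<beta> N)" "real (ipart \<beta> N) < real N"
      using xb yb elim bn by (auto simp: algebra_simps)
    then have c: "0 < ipart \<alpha> N" "ipart \<alpha> N < ipart \<beta> N" "ipart \<beta> N < N"
      by (simp_all only: of_nat_less_iff of_nat_0_less_iff)
    interpret W: walkN p N "ipart \<beta> N" by (rule walkN_I) (use p0 c in auto)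
    have "W.\<rho> = \<rho>" by (simp add: W.rho_eq \<rho>_def)
    then show ?case using W.main_ii[OF c(1,2)] W.w_le[of "ipart \<alpha> N"] c W.r_eq
      by (simp add: F_def)
  qed
  have kX: "filterlim (\<lambda>N. ipart \<alpha> N) at_top sequentially"
  proof (rule filterlim_lin[OF as(1), of 1])
    fix N show "\<alpha> * real N - 1 \<le> real (ipart \<alpha> N)" using ipart_bounds(1)[of \<alpha> N] as by simp
  qed
  have kY: "filterlim (\<lambda>N. ipart \<beta> N) at_top sequentially"
  proof (rule filterlim_lin[OF b0, of 1])
    fix N show "\<beta> * real N - 1 \<le> real (ipart \<beta> N)" using ipart_bounds(1)[of \<beta> N] as by simp
  qed
  have kY1: "filterlim (\<lambda>N. ipart \<beta> N - 1) at_top sequentially"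
  proof (rule filterlim_lin[OF b0, of 2])
    fix N show "\<beta> * real N - 2 \<le> real (ipart \<beta> N - 1)" using ipart_bounds(1)[of \<beta> N] as by linarith
  qed
  have kNY: "filterlim (\<lambda>N. N - ipart \<beta> N) at_top sequentially"
  proof (rule filterlim_lin[of "1 - \<beta>" 0])
    show "0 < 1 - \<beta>" using as by simp
    fix N
    have "real (ipart \<beta> N) \<le> \<beta> * real N" using ipart_bounds[of \<beta> N] as by simp
    moreover have "\<beta> * real N \<le> real N" using as by (simp add: mult_left_le_one_le)
    ultimately have "ipart \<beta> N \<le> N" by linarith
    then have "real (N - ipart \<beta> N) = real N - real (ipart \<beta> N)" by simp
    then show "(1 - \<beta>) * real N - 0 \<le> real (N - ipart \<beta> N)"
      using \<open>real (ipart \<beta> N) \<le> \<beta> * real N\<close> by (simp add: algebra_simps)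
  qed
  note lims = Sg_lim[OF r0 kX] Sg_lim[OF r0 kY] Sg_lim[OF r0 kY1] Sg_lim[OF r0 kNY]
  have den: "1 + (p * (1 - 1 / L) + (1 - p) * (L / L)) \<noteq> 0"
  proof -
    have "1 / L = 1 - \<rho>" using r0 by (simp add: L_def)
    then have "0 \<le> p * (1 - 1 / L)" using p0 r0 by simp
    moreover have "0 \<le> (1 - p) * (L / L)" using p0 L0 by simp
    ultimately show ?thesis by linarith
  qed
  have FL: "F \<longlonglongrightarrow> (L / L) / (1 + (p * (1 - 1 / L) + (1 - p) * (L / L)))"
    unfolding F_def using lims L0 den unfolding L_def[symmetric]
    by (intro tendsto_intros) auto
  have "(L / L) / (1 + (p * (1 - 1 / L) + (1 - p) * (L / L))) = 1 / (2 - (p - q))"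
  proof -
    have "1 / L = 1 - \<rho>" using r0 by (simp add: L_def)
    then have "p * (1 - 1 / L) = 1 - p" using p0 by (simp add: \<rho>_def field_simps)
    then show ?thesis using L0 pq by simp
  qed
  then have "F \<longlonglongrightarrow> 1 / (2 - (p - q))" using FL by simp
  then show ?thesis by (rule Lim_transform_eventually) (use ev in \<open>auto elim: eventually_mono\<close>)
qed


theorem proposition4p3:
  fixes \<alpha> \<beta> :: real
  assumes "0 < \<alpha>" "\<alpha> < 1" "0 < \<beta>" "\<beta> < 1" "\<alpha> \<noteq> \<beta>"
  shows
    "(\<forall>c::real. c \<ge> 0 \<longrightarrow>
       ((\<lambda>N. walk_cond_prob (walk_space (1/2 + c / real N))
               (\<lambda>\<omega>. odd (visits N (ipart \<alpha> N) \<omega> (ipart \<beta> N)))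
               (\<lambda>\<omega>. hit N (ipart \<alpha> N) \<omega> (ipart \<beta> N) < hit N (ipart \<alpha> N) \<omega> N
                   \<and> hit N (ipart \<alpha> N) \<omega> N < hit N (ipart \<alpha> N) \<omega> 0))
          \<longlonglongrightarrow> 1/2)
     \<and> ((\<lambda>N. walk_cond_prob (walk_space (1/2 + c / real N))
               (\<lambda>\<omega>. odd (visits N (ipart \<alpha> N) \<omega> (ipart \<beta> N)))
               (\<lambda>\<omega>. hit N (ipart \<alpha> N) \<omega> (ipart \<beta> N) < hit N (ipart \<alpha> N) \<omega> 0
                   \<and> hit N (ipart \<alpha> N) \<omega> 0 < hit N (ipart \<alpha> N) \<omega> N))
          \<longlonglongrightarrow> 1/2)
     \<and> ((\<lambda>N. walk_cond_prob (walk_space (1/2 + c / real N))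
               (\<lambda>\<omega>. odd (visits N (ipart \<alpha> N) \<omega> (ipart \<beta> N)))
               (\<lambda>\<omega>. hit N (ipart \<alpha> N) \<omega> (ipart \<beta> N) < exit_time N (ipart \<alpha> N) \<omega>))
          \<longlonglongrightarrow> 1/2))
     \<and> (\<forall>p q::real. 0 \<le> q \<longrightarrow> q < p \<longrightarrow> p + q = 1 \<longrightarrow> \<alpha> < \<beta> \<longrightarrow>
       (\<lambda>N. prob_of (walk_space p)
               (\<lambda>\<omega>. odd (visits N (ipart \<alpha> N) \<omega> (ipart \<beta> N))))
          \<longlonglongrightarrow> 1 / (2 - (p - q)))"
    apply (rule conjI)
   apply (intro allI impI)
   apply (rule part_i[OF assms])
   apply assumption
  apply (intro allI impI)
  apply (rule part_ii)
  using assms apply auto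
  done

end
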